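(* The law $\mathrm{x}\simeq\mathrm{x}\diamond((\mathrm{y}\diamond\mathrm{z})\diamond(\mathrm{x}\diamond\mathrm{z}))$ does not imply the law $\mathrm{x}\diamond\mathrm{y}\simeq\mathrm{x}\diamond(\mathrm{y}\diamond(\mathrm{x}\diamond\mathrm{y}))$.
   Context: A magma is a set with a binary operation $\diamond$; it satisfies a law if the identity holds for all assignments of variables. A law implies another if every magma satisfying the first satisfies the second. *)

theory Defs
  imports Main
begin

definition magma :: "'a set \<Rightarrow> ('a \<Rightarrow> 'a \<Rightarrow> 'a) \<Rightarrow> bool" where
  "magma M op \<longleftrightarrow> (\<forall>x\<in>M. \<forall>y\<in>M. op x y \<in> M)"

definition law1 :: "'a set \<Rightarrow> ('a \<Rightarrow> 'a \<Rightarrow> 'a) \<Rightarrow> bool" where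
  "law1 M op \<longleftrightarrow> (\<forall>x\<in>M. \<forall>y\<in>M. \<forall>z\<in>M. x = op x (op (op y z) (op x z)))"

definition law2 :: "'a set \<Rightarrow> ('a \<Rightarrow> 'a \<Rightarrow> 'a) \<Rightarrow> bool" where
  "law2 M op \<longleftrightarrow> (\<forall>x\<in>M. \<forall>y\<in>M. op x y = op x (op y (op x y)))"

end

theory Submission
  imports Defs "HOL-Library.Nat_Bijection"
begin

datatype tm = Ga | Gb | Nd tm tm

inductive Fx :: "tm \<Rightarrow> tm \<Rightarrow> bool" where
  R5: "Fx (Nd u t) t"
| R6: "(\<exists>v. u = Nd v w) \<or> Fx u w \<Longrightarrow> Fx t (Nd t w) \<Longrightarrow> Fx (Nd u (Nd t w)) t"
| R1: "(\<exists>v. s = Nd v w) \<or> Fx s w \<Longrightarrow> Fx x (Nd s (Nd x w))"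
| R7: "Fx x z \<Longrightarrow> Fx y z \<Longrightarrow> Fx x (Nd y x)"

fun nrm :: "tm \<Rightarrow> bool" where
  "nrm Ga = True" | "nrm Gb = True" | "nrm (Nd s t) = (nrm s \<and> nrm t \<and> \<not> Fx s t)"

definition tmop :: "tm \<Rightarrow> tm \<Rightarrow> tm" where
  "tmop s t = (if Fx s t then s else Nd s t)"

lemma shape: "Fx x t \<Longrightarrow> (\<exists>s. t = Nd s x) \<or> (\<exists>s w. t = Nd s (Nd x w)) \<or> (\<exists>u. x = Nd u t) \<or> (\<exists>u w. x = Nd u (Nd t w))"
  by (induction rule: Fx.induct) auto

lemma Orefl: "\<not> Fx t t"
  using shape[of t t] by (auto dest: arg_cong[where f=size])

lemma inv6: "Fx (Nd u (Nd t w)) t \<Longrightarrow> ((\<exists>v. u = Nd v w) \<or> Fx u w) \<and> Fx t (Nd t w)"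
  by (erule Fx.cases) (auto dest: arg_cong[where f=size])

lemma inv1: "Fx x (Nd a (Nd x w)) \<Longrightarrow> (\<exists>v. a = Nd v w) \<or> Fx a w"
  by (erule Fx.cases) (auto dest: arg_cong[where f=size])

lemma R3: "Fx x (Nd x x)"
proof -
  have h: "Fx x (Nd (Nd x x) (Nd x x))" by (rule Fx.R1) blast
  show ?thesis by (rule R7[OF h h])
qed

lemma exclA: "\<not> Fx Ga Gb"
  using shape[of Ga Gb] by auto

lemma exclB: "\<not> Fx Gb (Nd Ga Gb)"
proof
  assume "Fx Gb (Nd Ga Gb)"
  then show False
  proof (cases rule: Fx.cases)
    case (R7 z)
    from shape[OF R7(1)] shape[OF R7(2)] show False by auto
  qed
qed

lemma C1: "\<not> Fx (Nd y z) (Nd x z)"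
  using shape[of "Nd y z" "Nd x z"] by (auto dest: arg_cong[where f=size])

lemma C2: "Fx x z \<Longrightarrow> Fx (Nd y z) x \<Longrightarrow> Fx x (Nd y z)"
proof -
  assume a1: "Fx x z" and a2: "Fx (Nd y z) x"
  from shape[OF a2] consider (A) s where "x = Nd s (Nd y z)" | (B) s w where "x = Nd s (Nd (Nd y z) w)"
    | (C) u where "Nd y z = Nd u x" | (D) u w where "Nd y z = Nd u (Nd x w)" by blast
  then show ?thesis
  proof cases
    case A then show ?thesis by (simp add: Fx.R5)
  next
    case B
    from shape[OF a1] show ?thesis using B by (auto dest: arg_cong[where f=size])
  next
    case C then show ?thesis using a1 Orefl by auto
  next
    case D
    then have "y = u" "z = Nd x w" by auto
    with a2 inv6 have "(\<exists>v. y = Nd v w) \<or> Fx y w" by blast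
    then show ?thesis using \<open>z = Nd x w\<close> by (simp add: Fx.R1)
  qed
qed

lemma C3: "nrm z \<Longrightarrow> \<not> Fx x z \<Longrightarrow> Fx y z \<Longrightarrow> Fx y (Nd x z) \<Longrightarrow> Fx x y"
proof -
  assume nz: "nrm z" and a0: "\<not> Fx x z" and a1: "Fx y z" and a2: "Fx y (Nd x z)"
  from shape[OF a2] consider (A) s where "Nd x z = Nd s y" | (B) s w where "Nd x z = Nd s (Nd y w)"
    | (C) u where "y = Nd u (Nd x z)" | (D) u w where "y = Nd u (Nd (Nd x z) w)" by blast
  then show ?thesis
  proof cases
    case A then show ?thesis using a1 Orefl by auto
  next
    case B
    then have xs: "x = s" and zw: "z = Nd y w" by auto
    from a2 B have c1: "(\<exists>v. x = Nd v w) \<or> Fx x w" using inv1 by auto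
    from shape[OF a1[unfolded zw]] consider "w = y" | w' where "w = Nd y w'"
      by (auto dest: arg_cong[where f=size])
    then show ?thesis
    proof cases
      case 1 then show ?thesis using c1 by (auto intro: Fx.R5)
    next
      case 2
      from a1 zw 2 have "(\<exists>v. y = Nd v w') \<or> Fx y w'" using inv1 by auto
      moreover from nz zw 2 have "\<not> Fx y w'" by simp
      moreover from nz zw 2 have "\<not> (\<exists>v. y = Nd v w')" by (auto intro: Fx.R5)
      ultimately show ?thesis by blast
    qed
  next
    case C
    from shape[OF a1] C obtain "x = z" by (auto dest: arg_cong[where f=size])
    with C a1 inv6 have "(\<exists>v. u = Nd v z) \<or> Fx u z" by blast
    then show ?thesis using C \<open>x = z\<close> by (simp add: Fx.R1)
  next
    case D
    from shape[OF a1] D show ?thesis by (auto dest: arg_cong[where f=size])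
  qed
qed

lemma C4: "nrm x \<Longrightarrow> Fx x z \<Longrightarrow> Fx y z \<Longrightarrow> Fx y x \<Longrightarrow> Fx x y"
proof -
  assume nx: "nrm x" and a1: "Fx x z" and a2: "Fx y z" and a3: "Fx y x"
  from shape[OF a3] consider (A) s where "x = Nd s y" | (B) s w where "x = Nd s (Nd y w)"
    | (C) u where "y = Nd u x" | (D) u w where "y = Nd u (Nd x w)" by blast
  then show ?thesis
  proof cases
    case A then show ?thesis by (simp add: Fx.R5)
  next
    case B
    from a3 B have cs: "(\<exists>v. s = Nd v w) \<or> Fx s w" using inv1 by auto
    have "Fx y (Nd y w)"
    proof -
      from shape[OF a1] consider (x1) t where "z = Nd t x" | (x2) t w'' where "z = Nd t (Nd x w'')"
        | (x3) u where "x = Nd u z" | (x4) u w'' where "x = Nd u (Nd z w'')" by blast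
      then show ?thesis
      proof cases
        case x1
        from shape[OF a2] consider (y1) t' where "z = Nd t' y" | (y2) t' w3 where "z = Nd t' (Nd y w3)"
          | (y3) u' where "y = Nd u' z" | (y4) u' w3 where "y = Nd u' (Nd z w3)" by blast
        then show ?thesis
        proof cases
          case y1 with x1 B show ?thesis by (auto dest: arg_cong[where f=size])
        next
          case y2
          with x1 B have sy: "s = y" and w3: "w3 = Nd y w" by auto
          from a3 B sy have "(\<exists>v. y = Nd v w) \<or> Fx y w" using inv1 by auto
          moreover from nx B have "\<not> Fx y w" by simp
          moreover have "\<not> (\<exists>v. y = Nd v w)" using \<open>\<not> Fx y w\<close> by (auto intro: Fx.R5)
          ultimately show ?thesis by blast
        next
          case y3 with x1 B show ?thesis by (auto dest: arg_cong[where f=size])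
        next
          case y4 with x1 B show ?thesis by (auto dest: arg_cong[where f=size])
        qed
      next
        case x2
        from shape[OF a2] x2 B show ?thesis by (auto dest: arg_cong[where f=size])
      next
        case x3 with B a2 show ?thesis by auto
      next
        case x4 with B a2 Orefl show ?thesis by auto
      qed
    qed
    with cs B show ?thesis by (simp add: Fx.R6)
  next
    case C
    from shape[OF a2] consider (y1) t' where "z = Nd t' y" | (y2) t' w' where "z = Nd t' (Nd y w')"
      | (y3) u' where "y = Nd u' z" | (y4) u' w' where "y = Nd u' (Nd z w')" by blast
    then show ?thesis
    proof cases
      case y1
      from shape[OF a1] y1 C have "u = x" by (auto dest: arg_cong[where f=size])
      with C show ?thesis by (simp add: R3)
    next
      case y2
      from shape[OF a1] y2 C show ?thesis by (auto dest: arg_cong[where f=size])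
    next
      case y3 with C a1 Orefl show ?thesis by auto
    next
      case y4
      with C have xw: "x = Nd z w'" and uu: "u' = u" by auto
      from a2 y4 have "(\<exists>v. u' = Nd v w') \<or> Fx u' w'" using inv6 by blast
      then have "Fx u w'" using uu by (auto intro: Fx.R5)
      moreover have "Fx x w'" using xw by (simp add: Fx.R5)
      ultimately show ?thesis using C by (simp add: Fx.R7)
    qed
  next
    case D
    from a3 D have "(\<exists>v. u = Nd v w) \<or> Fx u w" using inv6 by blast
    then show ?thesis using D by (simp add: Fx.R1)
  qed
qed

lemma law1_tm: "nrm x \<Longrightarrow> nrm y \<Longrightarrow> nrm z \<Longrightarrow> tmop x (tmop (tmop y z) (tmop x z)) = x"
proof -
  assume nx: "nrm x" and ny: "nrm y" and nz: "nrm z"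
  have "Fx x (tmop (tmop y z) (tmop x z))"
  proof (cases "Fx x z")
    case True
    show ?thesis
    proof (cases "Fx y z")
      case True
      show ?thesis
      proof (cases "Fx y x")
        case True
        with C4[OF nx \<open>Fx x z\<close> \<open>Fx y z\<close>] show ?thesis by (simp add: tmop_def \<open>Fx x z\<close> \<open>Fx y z\<close>)
      next
        case False
        with Fx.R7[OF \<open>Fx x z\<close> \<open>Fx y z\<close>] show ?thesis by (simp add: tmop_def \<open>Fx x z\<close> \<open>Fx y z\<close>)
      qed
    next
      case False
      show ?thesis
      proof (cases "Fx (Nd y z) x")
        case True
        with C2[OF \<open>Fx x z\<close>] show ?thesis by (simp add: tmop_def \<open>Fx x z\<close> \<open>\<not> Fx y z\<close>)
      next
        case False
        have "Fx x (Nd (Nd y z) x)" by (rule Fx.R7[OF \<open>Fx x z\<close> Fx.R5])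
        with False show ?thesis by (simp add: tmop_def \<open>Fx x z\<close> \<open>\<not> Fx y z\<close>)
      qed
    qed
  next
    case False
    show ?thesis
    proof (cases "Fx y z")
      case True
      show ?thesis
      proof (cases "Fx y (Nd x z)")
        case True
        with C3[OF nz \<open>\<not> Fx x z\<close> \<open>Fx y z\<close>] show ?thesis by (simp add: tmop_def \<open>\<not> Fx x z\<close> \<open>Fx y z\<close>)
      next
        case False
        have "Fx x (Nd y (Nd x z))" using \<open>Fx y z\<close> by (intro Fx.R1) simp
        with False show ?thesis by (simp add: tmop_def \<open>\<not> Fx x z\<close> \<open>Fx y z\<close>)
      qed
    next
      case False
      have "Fx x (Nd (Nd y z) (Nd x z))" by (intro Fx.R1) simp
      with C1 show ?thesis by (simp add: tmop_def \<open>\<not> Fx x z\<close> \<open>\<not> Fx y z\<close>)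
    qed
  qed
  then show ?thesis by (simp add: tmop_def)
qed

lemma nrm_op: "nrm s \<Longrightarrow> nrm t \<Longrightarrow> nrm (tmop s t)"
  by (simp add: tmop_def)

lemma law2_fail: "tmop Ga Gb \<noteq> tmop Ga (tmop Gb (tmop Ga Gb))"
  using exclA exclB by (auto simp: tmop_def)


fun enc :: "tm \<Rightarrow> nat" where
  "enc Ga = 0" | "enc Gb = 1" | "enc (Nd s t) = Suc (Suc (prod_encode (enc s, enc t)))"

lemma enc_inj: "inj enc"
proof (rule injI)
  fix s t show "enc s = enc t \<Longrightarrow> s = t"
  proof (induction s arbitrary: t)
    case Ga then show ?case by (cases t) auto
  next
    case Gb then show ?case by (cases t) auto
  next
    case (Nd s1 s2)
    then show ?case by (cases t) (auto simp: prod_encode_eq)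
  qed
qed

theorem mainTheorem13:
  shows "\<exists>(M :: nat set) (op :: nat \<Rightarrow> nat \<Rightarrow> nat). magma M op \<and> law1 M op \<and> \<not> law2 M op"
proof -
  define M where "M = enc ` {t. nrm t}"
  define f where "f = (\<lambda>m n. enc (tmop (inv enc m) (inv enc n)))"
  have ie: "\<And>t. inv enc (enc t) = t" using enc_inj by (simp add: inv_f_f)
  have fe: "\<And>s t. f (enc s) (enc t) = enc (tmop s t)" by (simp add: f_def ie)
  have "magma M f"
    unfolding magma_def M_def using nrm_op fe by auto
  moreover have "law1 M f"
    unfolding law1_def M_def using law1_tm nrm_op fe by auto
  moreover have "\<not> law2 M f"
  proof
    assume "law2 M f"
    moreover have "enc Ga \<in> M" "enc Gb \<in> M" unfolding M_def by (rule imageI, simp)+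
    ultimately have "f (enc Ga) (enc Gb) = f (enc Ga) (f (enc Gb) (f (enc Ga) (enc Gb)))"
      unfolding law2_def by blast
    then have "enc (tmop Ga Gb) = enc (tmop Ga (tmop Gb (tmop Ga Gb)))" by (simp only: fe)
    then have "tmop Ga Gb = tmop Ga (tmop Gb (tmop Ga Gb))" using enc_inj by (simp add: inj_eq)
    with law2_fail show False by simp
  qed
  ultimately show ?thesis by blast
qed

end
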